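(* Let $d$ be odd and let $a,b,c\geq 1$ be integers with $2a+2b+2c=d+1$. For each $j=1,2,\ldots,b$, the couple $(D(a,b,c),(2j+1,0))$ is not realizable: there is no monic real polynomial of degree $d$ with all coefficients non-zero, defining the sign pattern $D(a,b,c)$, having exactly $2j+1$ positive simple roots and no other real roots.
   Context: A monic polynomial $x^d+\sum_{j<d}a_jx^j$ with all $a_j\neq0$ defines the sign pattern $(+,\operatorname{sign}(a_{d-1}),\ldots,\operatorname{sign}(a_0))$. $D(a,b,c)$ denotes the sign pattern of length $d+1$ (listed from the coefficient of $x^d$ down to the constant term) consisting of $2a$ pluses, followed by $b$ pairs "$-,+$", followed by $2c$ minuses. A monic polynomial realizes $(\sigma,(pos,neg))$ if it has all coefficients non-zero, defines $\sigma$, has exactly $pos$ positive and $neg$ negative real roots, all simple, and no other real roots. *)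

theory Defs
  imports "HOL-Computational_Algebra.Polynomial"
begin

text \<open>Sign patterns are lists of booleans (True = plus, False = minus), listed from the
coefficient of x^d down to the constant term; a pattern of length d+1.\<close>

definition D_pattern :: "nat \<Rightarrow> nat \<Rightarrow> nat \<Rightarrow> bool list" where
  "D_pattern a b c = replicate (2*a) True @ concat (replicate b [False, True]) @ replicate (2*c) False"

definition defines_sign_pattern :: "real poly \<Rightarrow> bool list \<Rightarrow> bool" where
  "defines_sign_pattern p \<sigma> \<longleftrightarrow>
     length \<sigma> = degree p + 1 \<and>
     (\<forall>k \<le> degree p. \<sigma> ! k = (coeff p (degree p - k) > 0))"

definition realizes :: "real poly \<Rightarrow> bool list \<Rightarrow> nat \<Rightarrow> nat \<Rightarrow> bool" where
  "realizes p \<sigma> pos neg \<longleftrightarrow>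
     lead_coeff p = 1 \<and>
     (\<forall>i \<le> degree p. coeff p i \<noteq> 0) \<and>
     defines_sign_pattern p \<sigma> \<and>
     card {x::real. x > 0 \<and> poly p x = 0} = pos \<and>
     card {x::real. x < 0 \<and> poly p x = 0} = neg \<and>
     (\<forall>x::real. poly p x = 0 \<longrightarrow> order x p = 1) \<and>
     poly p 0 \<noteq> 0"

end

theory Submission
  imports Defs
begin

lemma concat_rep_nth: "i < 2*b \<Longrightarrow> concat (replicate b [False, True]) ! i = odd i"
proof (induction b arbitrary: i)
  case 0 then show ?case by simp
next
  case (Suc b)
  have e: "concat (replicate (Suc b) [False, True]) = [False, True] @ concat (replicate b [False, True])"
    by simp
  have l: "length (concat (replicate b [False, True])) = 2*b"
    by (induction b) auto
  show ?case
  proof (cases "i < 2")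
    case True then show ?thesis unfolding e by (cases i) (auto simp: nth_append)
  next
    case False
    then have "i - 2 < 2*b" using Suc.prems by simp
    then have "concat (replicate b [False, True]) ! (i-2) = odd (i-2)" using Suc.IH by blast
    moreover have "odd (i-2) = odd i" using False by (simp add: even_diff_nat)
    ultimately show ?thesis unfolding e using False by (auto simp: nth_append numeral_2_eq_2)
  qed
qed

lemma D_nth:
  assumes "i < 2*a + 2*b + 2*c"
  shows "D_pattern a b c ! i = (i < 2*a \<or> (i < 2*a+2*b \<and> odd i))"
proof -
  have l: "length (concat (replicate b [False, True])) = 2*b"
    by (induction b) auto
  show ?thesis
    unfolding D_pattern_def using assms
    by (auto simp: nth_append l concat_rep_nth)
qed

lemma coeff_sign:
  assumes r: "realizes p (D_pattern a b c) pos neg" and dp: "degree p = d"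
    and s: "2*a + 2*b + 2*c = d + 1" and od: "odd d" and k: "k \<le> d"
  shows "coeff p k \<noteq> 0" and "coeff p k > 0 \<longleftrightarrow> (k \<ge> 2*b+2*c \<or> (k \<ge> 2*c \<and> even k))"
proof -
  show "coeff p k \<noteq> 0" using r k dp unfolding realizes_def by auto
  have "defines_sign_pattern p (D_pattern a b c)" using r unfolding realizes_def by auto
  then have "D_pattern a b c ! (d-k) = (coeff p (d - (d-k)) > 0)"
    unfolding defines_sign_pattern_def dp by auto
  moreover have "d - (d-k) = k" using k by simp
  moreover have "D_pattern a b c ! (d-k) = (d-k < 2*a \<or> (d-k < 2*a+2*b \<and> odd (d-k)))"
    using D_nth[of "d-k" a b c] s by simp
  moreover have "odd (d-k) \<longleftrightarrow> even k" using od k by (auto simp: even_diff_nat)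
  ultimately show "coeff p k > 0 \<longleftrightarrow> (k \<ge> 2*b+2*c \<or> (k \<ge> 2*c \<and> even k))"
    using s k by auto
qed

lemma term_mono:
  fixes f :: real and x y :: real and k m :: nat
  assumes "k \<ge> m \<longrightarrow> f \<ge> 0" "k < m \<longrightarrow> f \<le> 0" "0 < x" "x < y"
  shows "f * x^k / x^m \<le> f * y^k / y^m"
    and "k < m \<Longrightarrow> f < 0 \<Longrightarrow> f * x^k / x^m < f * y^k / y^m"
proof -
  have A: "z^k / z^m = (if k \<ge> m then z^(k-m) else 1 / z^(m-k))" if "z > 0" for z :: real
    using that by (auto simp: power_diff field_simps power_add[symmetric])
  have B: "x^(k-m) \<le> y^(k-m)" using assms by (intro power_mono) auto
  have C: "1 / y^(m-k) \<le> 1 / x^(m-k)" using assms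
    by (intro divide_left_mono power_mono) auto
  have C': "k < m \<Longrightarrow> 1 / y^(m-k) < 1 / x^(m-k)" using assms
    by (intro divide_strict_left_mono power_strict_mono) auto
  show "f * x^k / x^m \<le> f * y^k / y^m"
  proof (cases "k \<ge> m")
    case True
    then show ?thesis using A[of x] A[of y] assms B
      by (simp add: mult_left_mono times_divide_eq_right[symmetric] del: times_divide_eq_right)
  next
    case False
    then show ?thesis using A[of x] A[of y] assms C
      by (simp add: mult_left_mono_neg times_divide_eq_right[symmetric] del: times_divide_eq_right)
  qed
  show "k < m \<Longrightarrow> f < 0 \<Longrightarrow> f * x^k / x^m < f * y^k / y^m"
    using A[of x] A[of y] assms C'
    by (simp add: mult_strict_left_mono_neg times_divide_eq_right[symmetric] del: times_divide_eq_right)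
qed

lemma sum_mono_part:
  fixes f :: "nat \<Rightarrow> real"
  assumes "\<forall>k\<le>d. k \<ge> m \<longrightarrow> f k \<ge> 0" "\<forall>k\<le>d. k < m \<longrightarrow> f k \<le> 0"
    "k0 \<le> d" "k0 < m" "f k0 < 0" "0 < x" "x < y"
  shows "(\<Sum>k\<le>d. f k * x^k) / x^m < (\<Sum>k\<le>d. f k * y^k) / y^m"
proof -
  have "(\<Sum>k\<le>d. f k * x^k / x^m) < (\<Sum>k\<le>d. f k * y^k / y^m)"
  proof (rule sum_strict_mono_ex1)
    show "\<forall>k\<in>{..d}. f k * x^k / x^m \<le> f k * y^k / y^m"
      using assms term_mono(1) by auto
    show "\<exists>k\<in>{..d}. f k * x^k / x^m < f k * y^k / y^m"
      using assms term_mono(2) by (intro bexI[of _ k0]) auto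
  qed simp
  then show ?thesis by (simp add: sum_divide_distrib)
qed

theorem theorem6:
  fixes d a b c j :: nat
  assumes "odd d" and "a \<ge> 1" and "b \<ge> 1" and "c \<ge> 1"
    and "2*a + 2*b + 2*c = d + 1"
    and "1 \<le> j" and "j \<le> b"
  shows "\<not> (\<exists>p :: real poly. degree p = d \<and> realizes p (D_pattern a b c) (2*j+1) 0)"
proof
  assume "\<exists>p :: real poly. degree p = d \<and> realizes p (D_pattern a b c) (2*j+1) 0"
  then obtain p :: "real poly" where dp: "degree p = d" and r: "realizes p (D_pattern a b c) (2*j+1) 0"
    by blast
  note cs = coeff_sign[OF r dp assms(5) assms(1)]
  have p0: "p \<noteq> 0" using r unfolding realizes_def by auto
  define fE where "fE k = (if even k then coeff p k else 0)" for k
  define fO where "fO k = (if odd k then coeff p k else 0)" for k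
  define E where "E x = (\<Sum>k\<le>d. fE k * x^k)" for x :: real
  define Od where "Od x = (\<Sum>k\<le>d. fO k * x^k)" for x :: real
  have pEO: "poly p x = E x + Od x" for x
    unfolding poly_altdef dp E_def Od_def sum.distrib[symmetric]
    by (intro sum.cong) (auto simp: fE_def fO_def)
  have pEO': "poly p (-x) = E x - Od x" for x
    unfolding poly_altdef dp E_def Od_def sum_subtractf[symmetric]
    by (intro sum.cong) (auto simp: fE_def fO_def)
  have c0: "coeff p 0 < 0" using cs(1)[of 0] cs(2)[of 0] assms by auto
  have pz: "poly p 0 < 0" using c0 by (simp add: poly_0_coeff_0)
  have fin: "finite {x::real. x < 0 \<and> poly p x = 0}"
    using poly_roots_finite[OF p0] by (rule finite_subset[rotated]) auto
  have "card {x::real. x < 0 \<and> poly p x = 0} = 0" using r unfolding realizes_def by auto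
  then have noneg: "\<And>x. x < 0 \<Longrightarrow> poly p x \<noteq> 0" using fin by auto
  have negv: "poly p (-x) < 0" if xpos: "x > 0" for x
  proof (rule ccontr)
    assume "\<not> poly p (-x) < 0"
    then have "poly p (-x) > 0" using noneg[of "-x"] xpos by auto
    then obtain z where "-x < z" "z < 0" "poly p z = 0" using poly_IVT_neg[of "-x" 0 p] pz xpos by auto
    then show False using noneg by auto
  qed
  have Opos: "Od x > 0" if "x > 0" "poly p x = 0" for x
    using pEO[of x] pEO'[of x] negv[OF that(1)] that(2) by linarith
  have monoE: "E x / x^(2*c) < E y / y^(2*c)" if "0 < x" "x < y" for x y
    unfolding E_def
  proof (rule sum_mono_part[of d _ _ 0])
    show "\<forall>k\<le>d. 2 * c \<le> k \<longrightarrow> 0 \<le> fE k" using cs by (auto simp: fE_def less_imp_le)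
    show "\<forall>k\<le>d. k < 2 * c \<longrightarrow> fE k \<le> 0" using cs by (auto simp: fE_def not_less[symmetric])
    show "fE 0 < 0" using c0 by (simp add: fE_def)
  qed (use that assms in auto)
  have monoO: "Od x / x^(2*b+2*c) < Od y / y^(2*b+2*c)" if "0 < x" "x < y" for x y
    unfolding Od_def
  proof (rule sum_mono_part[of d _ _ 1])
    show "\<forall>k\<le>d. 2*b+2 * c \<le> k \<longrightarrow> 0 \<le> fO k" using cs by (auto simp: fO_def less_imp_le)
    show "\<forall>k\<le>d. k < 2*b+2 * c \<longrightarrow> fO k \<le> 0" using cs by (auto simp: fO_def not_less[symmetric])
    have "1 \<le> d" using assms by linarith
    then show "fO 1 < 0" using cs(1)[of 1] cs(2)[of 1] assms by (auto simp: fO_def)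
  qed (use that assms in auto)
  have key: "False" if "0 < x" "x < y" "poly p x = 0" "poly p y = 0" for x y
  proof -
    have ox: "Od x / x^(2*c) = x^(2*b) * (Od x / x^(2*b+2*c))" using that by (simp add: power_add)
    have oy: "Od y / y^(2*c) = y^(2*b) * (Od y / y^(2*b+2*c))" using that by (simp add: power_add)
    have g0: "Od x / x^(2*b+2*c) > 0" using Opos[of x] that by auto
    have "x^(2*b) * (Od x / x^(2*b+2*c)) \<le> y^(2*b) * (Od x / x^(2*b+2*c))"
      using g0 that by (intro mult_right_mono power_mono) auto
    also have "\<dots> \<le> y^(2*b) * (Od y / y^(2*b+2*c))"
      using monoO[OF that(1,2)] that by (intro mult_left_mono) auto
    finally have "Od x / x^(2*c) \<le> Od y / y^(2*c)" using ox oy by simp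
    moreover have "E x / x^(2*c) < E y / y^(2*c)" using monoE that by auto
    moreover have "E x / x^(2*c) + Od x / x^(2*c) = 0" using pEO[of x] that by (simp add: add_divide_distrib[symmetric])
    moreover have "E y / y^(2*c) + Od y / y^(2*c) = 0" using pEO[of y] that by (simp add: add_divide_distrib[symmetric])
    ultimately show False by linarith
  qed
  define S where "S = {x::real. x > 0 \<and> poly p x = 0}"
  have cS: "card S = 2*j+1" using r unfolding realizes_def S_def by auto
  have "S \<noteq> {}" using cS by auto
  then obtain x where xS: "x \<in> S" by auto
  have "\<not> S \<subseteq> {x}"
  proof
    assume "S \<subseteq> {x}"
    then have "card S \<le> 1" using card_mono[of "{x}" S] by auto
    then show False using cS assms by auto
  qed
  then obtain y where yS: "y \<in> S" "y \<noteq> x" by auto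
  show False
  proof (cases "x < y")
    case True then show ?thesis using key[of x y] xS yS unfolding S_def by auto
  next
    case False then show ?thesis using key[of y x] xS yS unfolding S_def by auto
  qed
qed

end
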